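(* Let $\gamma\in(0,2)$, $d\in\mathbb N_+$ and $H\in S^d_\gamma$. Then there is $C>0$ such that for all integers $n\ge1$, $$\frac{n^\gamma}{n^{2d}}\sup_{s\in[0,T]}\sum_{\hat x,\hat y\in\mathbb Z^d}\big[H_s(\tfrac{\hat y}n)-H_s(\tfrac{\hat x}n)\big]^2p_\gamma(\hat y-\hat x)\le C\frac{n+n^\gamma}{n^{d+1}}\le C\frac{n+n^\gamma}{n^2},$$ and there is $C'>0$ such that for all integers $n\ge2$, $\frac{n+n^\gamma}{n^2}\le C'\frac{r_n^\gamma}{n}$.
   Context: Fix $T>0$. $p_\gamma(\hat z)=c_\gamma|\hat z|^{-d-\gamma}\mathbb 1_{\hat z\ne0}$ with $c_\gamma>0$ such that $\sum_{\hat z}p_\gamma(\hat z)=1$. $r_n^\gamma=1$ if $\gamma\in(0,1)$, $\log n$ if $\gamma=1$, $n^{\gamma-1}$ if $\gamma\in(1,2)$. Test functions: $C^{1,2}$ = functions on $[0,T]\times\mathbb R^d$ continuously differentiable in time and twice in space; $C^{1,2}_c$ those with compact support; $S^{1,2}$ those $G\in C^{1,2}$ with $\partial_sG_s$ twice continuously differentiable in space and $\sup_s\sup_{\hat u}|\hat u|^k\sum_{K\in\{G_s,\partial_sG_s\}}(|K|+\sum_j|\partial_jK|+\sum_{i,j}|\partial_{ij}K|)<\infty$ for all $k$. $S^d_\gamma=C^{1,2}_c$ if $\gamma\in(0,1]$ or $d\ge2$; $S^{1,2}([0,T]\times\mathbb R)$ if $d=1,\gamma\in(1,2)$. *)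

theory Defs
  imports "HOL-Analysis.Analysis"
begin

text \<open>Points of R^d are vectors of type real^'n with d = CARD('n).
  The lattice Z^d is the set of integer-coordinate vectors.\<close>

definition lattice :: "(real^'n::finite) set" where
  "lattice = {x. \<forall>i. x $ i \<in> \<int>}"

definition c_gamma :: "real \<Rightarrow> 'n::finite itself \<Rightarrow> real" where
  "c_gamma \<gamma> _ = 1 / (\<Sum>\<^sub>\<infinity>z \<in> (lattice :: (real^'n) set) - {0}.
        norm z powr (- (real CARD('n) + \<gamma>)))"

definition p_gamma :: "real \<Rightarrow> real^'n::finite \<Rightarrow> real" where
  "p_gamma \<gamma> z = (if z = 0 then 0
     else c_gamma \<gamma> TYPE('n) * norm z powr (- (real CARD('n) + \<gamma>)))"

definition r_n :: "real \<Rightarrow> nat \<Rightarrow> real" where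
  "r_n \<gamma> n = (if \<gamma> < 1 then 1 else if \<gamma> = 1 then ln (real n) else real n powr (\<gamma> - 1))"

definition sderiv :: "'n::finite \<Rightarrow> (real^'n \<Rightarrow> real) \<Rightarrow> (real^'n \<Rightarrow> real) \<Rightarrow> bool" where
  "sderiv i f g \<longleftrightarrow> (\<forall>u. ((\<lambda>h. f (u + h *\<^sub>R axis i 1)) has_real_derivative g u) (at 0))"

abbreviation jcont :: "real \<Rightarrow> (real \<Rightarrow> real^'n::finite \<Rightarrow> real) \<Rightarrow> bool" where
  "jcont T F \<equiv> continuous_on ({0..T} \<times> UNIV) (\<lambda>p. F (fst p) (snd p))"

text \<open>C^{1,2} on [0,T] x R^d, with witnesses Ht (time derivative), D1 (first spatial
  partials), D2 (second spatial partials, D2 i j = d_j d_i), all jointly continuous.\<close>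

definition C12_wit :: "real \<Rightarrow> (real \<Rightarrow> real^'n::finite \<Rightarrow> real) \<Rightarrow>
    (real \<Rightarrow> real^'n \<Rightarrow> real) \<Rightarrow> ('n \<Rightarrow> real \<Rightarrow> real^'n \<Rightarrow> real) \<Rightarrow>
    ('n \<Rightarrow> 'n \<Rightarrow> real \<Rightarrow> real^'n \<Rightarrow> real) \<Rightarrow> bool" where
  "C12_wit T H Ht D1 D2 \<longleftrightarrow>
     (\<forall>s\<in>{0..T}. \<forall>u. ((\<lambda>t. H t u) has_real_derivative Ht s u) (at s within {0..T})) \<and>
     (\<forall>s\<in>{0..T}. \<forall>i. sderiv i (H s) (D1 i s)) \<and>
     (\<forall>s\<in>{0..T}. \<forall>i j. sderiv j (D1 i s) (D2 i j s)) \<and>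
     jcont T H \<and> jcont T Ht \<and> (\<forall>i. jcont T (D1 i)) \<and> (\<forall>i j. jcont T (D2 i j))"

definition C12 :: "real \<Rightarrow> (real \<Rightarrow> real^'n::finite \<Rightarrow> real) \<Rightarrow> bool" where
  "C12 T H \<longleftrightarrow> (\<exists>Ht D1 D2. C12_wit T H Ht D1 D2)"

definition C12c :: "real \<Rightarrow> (real \<Rightarrow> real^'n::finite \<Rightarrow> real) \<Rightarrow> bool" where
  "C12c T H \<longleftrightarrow> C12 T H \<and> (\<exists>K. compact K \<and> (\<forall>s\<in>{0..T}. \<forall>u. u \<notin> K \<longrightarrow> H s u = 0))"

definition S12 :: "real \<Rightarrow> (real \<Rightarrow> real^'n::finite \<Rightarrow> real) \<Rightarrow> bool" where
  "S12 T G \<longleftrightarrow> (\<exists>Gt D1 D2 E1 E2. C12_wit T G Gt D1 D2 \<and>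
     (\<forall>s\<in>{0..T}. \<forall>i. sderiv i (Gt s) (E1 i s) \<and> continuous_on UNIV (E1 i s)) \<and>
     (\<forall>s\<in>{0..T}. \<forall>i j. sderiv j (E1 i s) (E2 i j s) \<and> continuous_on UNIV (E2 i j s)) \<and>
     (\<forall>k::nat. \<exists>B. \<forall>s\<in>{0..T}. \<forall>u.
        norm u ^ k * (\<bar>G s u\<bar> + (\<Sum>j\<in>UNIV. \<bar>D1 j s u\<bar>) + (\<Sum>i\<in>UNIV. \<Sum>j\<in>UNIV. \<bar>D2 i j s u\<bar>)
          + \<bar>Gt s u\<bar> + (\<Sum>j\<in>UNIV. \<bar>E1 j s u\<bar>) + (\<Sum>i\<in>UNIV. \<Sum>j\<in>UNIV. \<bar>E2 i j s u\<bar>)) \<le> B))"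

definition S_gamma :: "real \<Rightarrow> real \<Rightarrow> (real \<Rightarrow> real^'n::finite \<Rightarrow> real) \<Rightarrow> bool" where
  "S_gamma T \<gamma> H \<longleftrightarrow> (if \<gamma> \<le> 1 \<or> CARD('n) \<ge> 2 then C12c T H else S12 T H)"

text \<open>The double lattice sum, as an extended nonnegative real (it may a priori be infinite).\<close>

definition dsum :: "real \<Rightarrow> (real \<Rightarrow> real^'n::finite \<Rightarrow> real) \<Rightarrow> nat \<Rightarrow> real \<Rightarrow> ennreal" where
  "dsum \<gamma> H n s = (\<Sum>\<^sub>\<infinity>(x, y) \<in> lattice \<times> lattice.
      ennreal ((H s ((1 / real n) *\<^sub>R y) - H s ((1 / real n) *\<^sub>R x))\<^sup>2 * p_gamma \<gamma> (y - x)))"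

end

theory Submission
  imports Defs
begin
definition mx :: "real^'n::finite \<Rightarrow> real" where
  "mx z = Max (range (\<lambda>i. \<bar>z$i\<bar>))"

lemma mx_ge: "\<bar>z$i\<bar> \<le> mx z"
  unfolding mx_def by (rule Max_ge) auto

lemma mx_in: "\<exists>i. mx z = \<bar>z$i\<bar>"
proof -
  have "mx z \<in> range (\<lambda>i. \<bar>z$i\<bar>)" unfolding mx_def by (rule Max_in) auto
  then show ?thesis by auto
qed

lemma mx_le_iff: "mx z \<le> r \<longleftrightarrow> (\<forall>i. \<bar>z$i\<bar> \<le> r)"
  unfolding mx_def by (subst Max_le_iff) auto

lemma mx_nonneg: "0 \<le> mx z"
  using mx_ge[of z] abs_ge_zero order_trans by metis

lemma mx_le_norm: "mx z \<le> norm z"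
  using mx_in[of z] component_le_norm_cart by metis

lemma norm_le_mx:
  fixes z :: "real^'n::finite"
  shows "norm z \<le> real CARD('n) * mx z"
proof -
  have "norm z \<le> (\<Sum>i\<in>UNIV. \<bar>z$i\<bar>)" by (rule norm_le_l1_cart)
  also have "\<dots> \<le> (\<Sum>i\<in>(UNIV::'n set). mx z)" by (rule sum_mono) (rule mx_ge)
  finally show ?thesis by simp
qed

lemma mx_scale: "r \<ge> 0 \<Longrightarrow> mx (r *\<^sub>R z) = r * mx z"
proof -
  assume r: "r \<ge> 0"
  obtain i where i: "mx (r *\<^sub>R z) = \<bar>(r *\<^sub>R z)$i\<bar>" using mx_in by blast
  obtain j where j: "mx z = \<bar>z$j\<bar>" using mx_in by blast
  have "mx (r *\<^sub>R z) \<le> r * mx z" using i r mx_ge[of z i] by (simp add: abs_mult mult_left_mono)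
  moreover have "r * mx z \<le> mx (r *\<^sub>R z)" using j r mx_ge[of "r *\<^sub>R z" j] by (simp add: abs_mult)
  ultimately show ?thesis by simp
qed

lemma mx_zero_iff: "mx z = 0 \<longleftrightarrow> z = 0"
proof
  assume "mx z = 0"
  then have "\<forall>i. \<bar>z$i\<bar> \<le> 0" using mx_le_iff by (metis order_refl)
  then show "z = 0" by (simp add: vec_eq_iff)
next
  assume "z = 0" then show "mx z = 0" using mx_in[of z] by auto
qed

lemma mx_lattice_int: "z \<in> lattice \<Longrightarrow> mx z \<in> \<int>"
  using mx_in[of z] by (auto simp: lattice_def)

definition km :: "real^'n::finite \<Rightarrow> nat" where
  "km z = nat \<lfloor>mx z\<rfloor>"

lemma km_real: "z \<in> lattice \<Longrightarrow> real (km z) = mx z"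
  unfolding km_def using mx_lattice_int[of z] mx_nonneg[of z]
  by (metis Ints_cases floor_of_int of_int_0_le_iff of_nat_nat)

definition cube :: "nat \<Rightarrow> (real^'n::finite) set" where
  "cube k = {z\<in>lattice. mx z \<le> real k}"

lemma card_cube: "card (cube k :: (real^'n::finite) set) = (2*k+1)^CARD('n)"
proof -
  let ?P = "PiE (UNIV::'n set) (\<lambda>_. {-int k..int k})"
  have bij: "bij_betw (\<lambda>f. \<chi> i. real_of_int (f i)) ?P (cube k)"
  proof (rule bij_betwI')
    fix f g assume "f \<in> ?P" "g \<in> ?P"
    show "((\<chi> i. real_of_int (f i)) = (\<chi> i. real_of_int (g i))) = (f = g)"
      by (auto simp: vec_eq_iff fun_eq_iff)
  next
    fix f assume f: "f \<in> ?P"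
    have "\<forall>i. \<bar>f i\<bar> \<le> int k"
    proof
      fix i have "f i \<in> {-int k..int k}" using f by (auto simp: PiE_iff)
      then show "\<bar>f i\<bar> \<le> int k" by auto
    qed
    then show "(\<chi> i. real_of_int (f i)) \<in> cube k"
      unfolding cube_def lattice_def mx_le_iff by simp (metis of_int_abs of_int_le_iff of_int_of_nat_eq)
  next
    fix z :: "real^'n" assume z: "z \<in> cube k"
    then have zi: "\<forall>i. z$i \<in> \<int>" and zb: "\<forall>i. \<bar>z$i\<bar> \<le> real k"
      by (auto simp: cube_def lattice_def mx_le_iff)
    define f where "f = (\<lambda>i. \<lfloor>z$i\<rfloor>)"
    have fe: "real_of_int (f i) = z$i" for i using zi unfolding f_def by (metis Ints_cases floor_of_int)
    have "\<bar>f i\<bar> \<le> int k" for i using zb[rule_format, of i] fe[of i]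
      by (metis of_int_abs of_int_le_iff of_int_of_nat_eq)
    then have "f \<in> ?P" by (auto simp: PiE_iff abs_le_iff) (metis minus_le_iff)
    moreover have "z = (\<chi> i. real_of_int (f i))" by (simp add: vec_eq_iff fe)
    ultimately show "\<exists>f\<in>?P. z = (\<chi> i. real_of_int (f i))" by blast
  qed
  have "card (cube k :: (real^'n) set) = card ?P" using bij_betw_same_card[OF bij] by simp
  also have "\<dots> = (2*k+1)^CARD('n)" proof -
    have "nat (2 * int k + 1) = Suc (2*k)" by simp
    then show ?thesis by (simp add: card_PiE)
  qed
  finally show ?thesis .
qed

lemma finite_cube: "finite (cube k :: (real^'n::finite) set)"
  using card_cube[of k, where 'n='n] by (intro card_ge_0_finite) simp

definition shell :: "nat \<Rightarrow> (real^'n::finite) set" where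
  "shell k = {z\<in>lattice. km z = k}"

lemma cube_km: "cube k = {z\<in>lattice. km z \<le> k}"
proof -
  have "z \<in> lattice \<Longrightarrow> mx z \<le> real k \<longleftrightarrow> km z \<le> k" for z
    using km_real[of z] by (metis of_nat_le_iff)
  then show ?thesis unfolding cube_def by blast
qed

lemma shell_Suc: "shell (Suc k) = cube (Suc k) - cube k"
  unfolding shell_def cube_km by auto

lemma shell_0: "shell 0 = cube 0"
  unfolding shell_def cube_km by auto

lemma pow_diff_le:
  fixes a b :: real assumes "0 \<le> b" "b \<le> a"
  shows "a^Suc d - b^Suc d \<le> real (Suc d) * (a - b) * a^d"
proof (induction d)
  case 0 then show ?case by simp
next
  case (Suc d)
  have "a^Suc (Suc d) - b^Suc (Suc d) = a * (a^Suc d - b^Suc d) + b^Suc d * (a - b)"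
    by (simp add: algebra_simps)
  also have "\<dots> \<le> a * (real (Suc d) * (a - b) * a^d) + a^Suc d * (a - b)"
    using Suc assms by (intro add_mono mult_left_mono mult_right_mono power_mono) auto
  also have "\<dots> = real (Suc (Suc d)) * (a - b) * a^Suc d" by (simp add: algebra_simps)
  finally show ?case .
qed

lemma card_shell:
  assumes "k \<ge> 1"
  shows "real (card (shell k :: (real^'n::finite) set)) \<le> (2 * real CARD('n) * 3^(CARD('n) - 1)) * real k ^ (CARD('n) - 1)"
proof -
  let ?d = "CARD('n)"
  obtain j where k: "k = Suc j" using assms by (cases k) auto
  have "?d > 0" by simp
  then obtain e where e: "?d = Suc e" using gr0_implies_Suc by blast
  have sub: "cube j \<subseteq> (cube (Suc j) :: (real^'n) set)" unfolding cube_def by auto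
  have le: "card (cube j :: (real^'n) set) \<le> card (cube (Suc j) :: (real^'n) set)"
    by (rule card_mono[OF finite_cube sub])
  have "card (shell k :: (real^'n) set) = card (cube (Suc j) :: (real^'n) set) - card (cube j :: (real^'n) set)"
    unfolding k shell_Suc by (rule card_Diff_subset[OF finite_cube sub])
  then have "real (card (shell k :: (real^'n) set)) = real (card (cube (Suc j) :: (real^'n) set)) - real (card (cube j :: (real^'n) set))"
    using le by simp
  also have "\<dots> = real (2*Suc j+1)^Suc e - real (2*j+1)^Suc e"
    unfolding card_cube e of_nat_power by simp
  finally have c: "real (card (shell k :: (real^'n) set)) = real (2*Suc j+1)^Suc e - real (2*j+1)^Suc e" .
  have "real (2*Suc j+1)^Suc e - real (2*j+1)^Suc e \<le> real (Suc e) * (real (2*Suc j+1) - real (2*j+1)) * real (2*Suc j+1)^e"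
    by (rule pow_diff_le) auto
  also have "\<dots> = 2 * real (Suc e) * real (2*Suc j+1)^e" by simp
  also have "\<dots> \<le> 2 * real (Suc e) * (3 * real k)^e"
  proof -
    have "real (2*Suc j+1) \<le> 3 * real k" using k by simp
    then show ?thesis by (intro mult_left_mono power_mono) auto
  qed
  also have "\<dots> = (2 * real ?d * 3^(?d - 1)) * real k ^ (?d - 1)" unfolding e by (simp add: power_mult_distrib)
  finally show ?thesis using c by simp
qed

lemma card_shell0: "card (shell 0 :: (real^'n::finite) set) = 1"
  unfolding shell_0 by (simp add: card_cube)

lemma finite_shell: "finite (shell k :: (real^'n::finite) set)"
proof -
  have "shell k \<subseteq> (cube k :: (real^'n) set)" unfolding shell_def cube_km by auto
  then show ?thesis using finite_cube finite_subset by blast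
qed

definition Sc :: "'n::finite itself \<Rightarrow> real" where
  "Sc _ = 2 * real CARD('n) * 3^(CARD('n) - 1)"

lemma Sc_pos: "Sc TYPE('n::finite) > 0"
  unfolding Sc_def by simp

lemma shell_sum:
  fixes F :: "nat \<Rightarrow> real" and Z :: "(real^'n::finite) set"
  assumes F: "\<And>k. F k \<ge> 0" and Z: "finite Z" "Z \<subseteq> lattice"
  shows "\<exists>N. (\<Sum>z\<in>Z. F (km z)) \<le> F 0 + (\<Sum>k\<in>{1..N}. Sc TYPE('n) * real k ^ (CARD('n) - 1) * F k)"
proof -
  define N where "N = Max (insert 0 (km ` Z))"
  have ZN: "Z \<subseteq> cube N" unfolding cube_km N_def using Z by auto
  have "(\<Sum>z\<in>Z. F (km z)) \<le> (\<Sum>z\<in>(cube N :: (real^'n) set). F (km z))"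
    using ZN by (intro sum_mono2) (auto simp: F finite_cube)
  also have "\<dots> = (\<Sum>k\<in>{0..N}. (\<Sum>z\<in>{z\<in>(cube N :: (real^'n) set). km z = k}. F (km z)))"
    by (rule sum.group[symmetric]) (auto simp: finite_cube, auto simp: cube_km)
  also have "\<dots> = (\<Sum>k\<in>{0..N}. real (card (shell k :: (real^'n) set)) * F k)"
  proof (rule sum.cong[OF refl])
    fix k assume "k \<in> {0..N}"
    then have "{z\<in>(cube N :: (real^'n) set). km z = k} = (shell k :: (real^'n) set)" unfolding shell_def cube_km by auto
    then show "(\<Sum>z\<in>{z\<in>(cube N :: (real^'n) set). km z = k}. F (km z)) = real (card (shell k :: (real^'n) set)) * F k"
      by (simp add: shell_def)
  qed
  also have "\<dots> = F 0 + (\<Sum>k\<in>{0<..N}. real (card (shell k :: (real^'n) set)) * F k)"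
    by (subst sum.head) (auto simp: card_shell0)
  also have "{0<..N} = {1..N}" by auto
  also have "(\<Sum>k\<in>{1..N}. real (card (shell k :: (real^'n) set)) * F k) \<le> (\<Sum>k\<in>{1..N}. Sc TYPE('n) * real k ^ (CARD('n) - 1) * F k)"
  proof (rule sum_mono, rule mult_right_mono)
    fix k assume "k \<in> {1..N}"
    then show "real (card (shell k :: (real^'n) set)) \<le> Sc TYPE('n) * real k ^ (CARD('n) - 1)"
      unfolding Sc_def by (intro card_shell) auto
  qed (simp add: F)
  finally show ?thesis by auto
qed

lemma mvt_powr:
  fixes a b p :: real assumes "0 < a" "a < b"
  shows "\<exists>z. a < z \<and> z < b \<and> b powr p - a powr p = (b - a) * (p * z powr (p - 1))"
  using assms by (intro MVT2) (auto intro!: has_real_derivative_powr)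

lemma step_T1:
  fixes g :: real and N :: nat assumes "0 < g" "g \<le> 1"
  shows "real (Suc N) powr (g - 1) \<le> (real (Suc N) powr g - real N powr g) / g"
proof (cases "N = 0")
  case True then show ?thesis using assms by simp
next
  case False
  then have N: "real N > 0" by simp
  obtain z where z: "real N < z" "z < real (Suc N)"
    "real (Suc N) powr g - real N powr g = (real (Suc N) - real N) * (g * z powr (g - 1))"
    using mvt_powr[OF N, of "real (Suc N)" g] by auto
  have "real (Suc N) powr (g - 1) \<le> z powr (g - 1)"
    using z N assms by (intro powr_mono2') auto
  then show ?thesis using z assms by (simp add: field_simps)
qed

lemma T1:
  fixes \<gamma> :: real assumes "0 < \<gamma>" "\<gamma> < 2"
  shows "(\<Sum>k\<in>{1..n}. real k powr (1 - \<gamma>)) \<le> (1 + 1/(2-\<gamma>)) * real n powr (2 - \<gamma>)"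
proof (cases "\<gamma> \<le> 1")
  case True
  have "(\<Sum>k\<in>{1..n}. real k powr (1 - \<gamma>)) \<le> (\<Sum>k\<in>{1..n}. real n powr (1 - \<gamma>))"
    using True by (intro sum_mono powr_mono2) auto
  also have "\<dots> = real n powr (2 - \<gamma>)"
  proof (cases "n = 0")
    case False
    then show ?thesis by (simp add: powr_add[symmetric] powr_mult_base)
  qed simp
  also have "\<dots> \<le> (1 + 1/(2-\<gamma>)) * real n powr (2 - \<gamma>)"
    using assms by (simp add: algebra_simps)
  finally show ?thesis .
next
  case False
  have "(\<Sum>k\<in>{1..N}. real k powr (1 - \<gamma>)) \<le> real N powr (2 - \<gamma>) / (2 - \<gamma>)" for N
  proof (induction N)
    case 0 then show ?case by simp
  next
    case (Suc N)
    have "(\<Sum>k\<in>{1..Suc N}. real k powr (1 - \<gamma>)) = (\<Sum>k\<in>{1..N}. real k powr (1 - \<gamma>)) + real (Suc N) powr (1 - \<gamma>)"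
      by simp
    also have "\<dots> \<le> real N powr (2 - \<gamma>) / (2 - \<gamma>) + (real (Suc N) powr (2-\<gamma>) - real N powr (2-\<gamma>)) / (2-\<gamma>)"
      using Suc step_T1[of "2 - \<gamma>" N] False assms by (intro add_mono) auto
    also have "\<dots> = real (Suc N) powr (2 - \<gamma>) / (2 - \<gamma>)" by (simp add: diff_divide_distrib)
    finally show ?case .
  qed
  then have "(\<Sum>k\<in>{1..n}. real k powr (1 - \<gamma>)) \<le> real n powr (2 - \<gamma>) / (2 - \<gamma>)" .
  also have "\<dots> \<le> (1 + 1/(2-\<gamma>)) * real n powr (2 - \<gamma>)"
  proof -
    have "0 \<le> real n powr (2 - \<gamma>)" by simp
    then show ?thesis by (simp add: ring_distribs)
  qed
  finally show ?thesis .
qed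

lemma step_T2:
  fixes g :: real and N :: nat assumes "0 < g" "N \<ge> 1"
  shows "real (Suc N) powr (-1 - g) \<le> (real N powr (-g) - real (Suc N) powr (-g)) / g"
proof -
  have N: "real N > 0" using assms by simp
  obtain z where z: "real N < z" "z < real (Suc N)"
    "real (Suc N) powr (-g) - real N powr (-g) = (real (Suc N) - real N) * ((-g) * z powr (-g - 1))"
    using mvt_powr[OF N, of "real (Suc N)" "-g"] by auto
  have mz: "real (Suc N) powr (-1 - g) \<le> z powr (-1 - g)"
    using z N assms by (intro powr_mono2') auto
  have e: "-g - 1 = -1 - g" by simp
  have "g * real (Suc N) powr (-1 - g) \<le> g * z powr (-g - 1)"
    unfolding e using assms mz by (simp add: mult_left_mono)
  then have "g * real (Suc N) powr (-1 - g) \<le> real N powr (-g) - real (Suc N) powr (-g)"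
    using z(3) by simp
  then show ?thesis using assms by (simp add: field_simps)
qed

lemma T2:
  fixes \<gamma> :: real assumes "0 < \<gamma>" "n \<ge> 1"
  shows "(\<Sum>k\<in>{n<..N}. real k powr (-1 - \<gamma>)) \<le> real n powr (-\<gamma>) / \<gamma>"
proof (cases "n \<le> N")
  case True
  have "(\<Sum>k\<in>{n<..N}. real k powr (-1 - \<gamma>)) \<le> (real n powr (-\<gamma>) - real N powr (-\<gamma>)) / \<gamma>"
    using True
  proof (induction N rule: dec_induct)
    case base then show ?case by simp
  next
    case (step N)
    have "{n<..Suc N} = insert (Suc N) {n<..N}" using step by auto
    then have "(\<Sum>k\<in>{n<..Suc N}. real k powr (-1 - \<gamma>)) = real (Suc N) powr (-1 - \<gamma>) + (\<Sum>k\<in>{n<..N}. real k powr (-1 - \<gamma>))"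
      by simp
    also have "\<dots> \<le> (real N powr (-\<gamma>) - real (Suc N) powr (-\<gamma>)) / \<gamma> + (real n powr (-\<gamma>) - real N powr (-\<gamma>)) / \<gamma>"
      using step step_T2[of \<gamma> N] assms by (intro add_mono) auto
    also have "\<dots> = (real n powr (-\<gamma>) - real (Suc N) powr (-\<gamma>)) / \<gamma>" by (simp add: diff_divide_distrib)
    finally show ?case .
  qed
  also have "\<dots> \<le> real n powr (-\<gamma>) / \<gamma>" using assms by (simp add: divide_right_mono)
  finally show ?thesis .
next
  case False then show ?thesis using assms by simp
qed

lemma T3:
  fixes n :: nat assumes "n \<ge> 1"
  shows "(\<Sum>k\<in>{1..N}. 1 / (1 + real k / real n)^2) \<le> real n"
proof -
  have eq: "1 / (1 + real k / real n)^2 = real n^2 / (real n + real k)^2" for k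
    using assms by (simp add: field_simps)
  have "(\<Sum>k\<in>{1..N}. real n^2 / (real n + real k)^2) \<le> real n - real n^2 / (real n + real N)" for N
  proof (induction N)
    case 0 then show ?case using assms by (simp add: power2_eq_square)
  next
    case (Suc N)
    have st: "real n^2 / (real n + real (Suc N))^2 \<le> real n^2 / (real n + real N) - real n^2 / (real n + real (Suc N))"
    proof -
      have p: "real n + real N > 0" using assms by simp
      have "real n^2 / (real n + real N) - real n^2 / (real n + real (Suc N)) = real n^2 / ((real n + real N) * (real n + real (Suc N)))"
        using p by (simp add: field_simps)
      also have "\<dots> \<ge> real n^2 / (real n + real (Suc N))^2"
        using p by (intro divide_left_mono) (auto simp: power2_eq_square intro!: mult_right_mono mult_pos_pos)
      finally show ?thesis .
    qed
    show ?case using Suc st by simp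
  qed
  then show ?thesis unfolding eq
    by (smt (verit, ccfv_SIG) divide_nonneg_nonneg of_nat_0_le_iff zero_le_power2)
qed

lemma path_bound:
  fixes f :: "real^'n::finite \<Rightarrow> real" and D :: "'n \<Rightarrow> real^'n \<Rightarrow> real"
  assumes der: "\<And>i. sderiv i f (D i)"
    and bnd: "\<And>i w. norm (w - a) \<le> norm (b - a) \<Longrightarrow> \<bar>D i w\<bar> \<le> L"
  shows "\<bar>f b - f a\<bar> \<le> L * real CARD('n) * norm (b - a)"
proof -
  have L0: "0 \<le> L"
  proof -
    obtain i :: 'n where True by blast
    have "\<bar>D i a\<bar> \<le> L" using bnd[of a i] by simp
    then show ?thesis by linarith
  qed
  define c where "c I = (\<chi> j. if j \<in> I then b$j else a$j)" for I :: "'n set"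
  have main: "\<bar>f (c I) - f a\<bar> \<le> L * (\<Sum>i\<in>I. \<bar>b$i - a$i\<bar>)" for I
  proof -
    have "finite I" by simp
    then show ?thesis
    proof (induction I rule: finite_induct)
      case empty
      have "c {} = a" unfolding c_def by (simp add: vec_eq_iff)
      then show ?case by simp
    next
      case (insert i I)
      define h where "h = b$i - a$i"
      define \<phi> where "\<phi> t = f (c I + t *\<^sub>R axis i 1)" for t
      have ci: "c (insert i I) = c I + h *\<^sub>R axis i 1"
        using insert(2) unfolding c_def h_def by (auto simp: vec_eq_iff axis_def)
      have dphi: "(\<phi> has_field_derivative D i (c I + t *\<^sub>R axis i 1)) (at t)" for t
      proof -
        have "((\<lambda>s. f ((c I + t *\<^sub>R axis i 1) + s *\<^sub>R axis i 1)) has_real_derivative D i (c I + t *\<^sub>R axis i 1)) (at 0)"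
          using der[of i] unfolding sderiv_def by blast
        moreover have "(\<lambda>s. f ((c I + t *\<^sub>R axis i 1) + s *\<^sub>R axis i 1)) = (\<lambda>s. \<phi> (s + t))"
          unfolding \<phi>_def by (simp add: algebra_simps)
        ultimately have "((\<lambda>s. \<phi> (s + t)) has_field_derivative D i (c I + t *\<^sub>R axis i 1)) (at 0)" by simp
        then show ?thesis using DERIV_shift[of \<phi> _ 0 t] by simp
      qed
      have dbnd: "\<bar>D i (c I + t *\<^sub>R axis i 1)\<bar> \<le> L" if t: "t \<in> closed_segment 0 h" for t
      proof -
        have th: "\<bar>t\<bar> \<le> \<bar>h\<bar>" using t by (auto simp: closed_segment_eq_real_ivl split: if_splits)
        have "norm (c I + t *\<^sub>R axis i 1 - a) \<le> norm (b - a)"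
        proof (rule norm_le_componentwise_cart)
          fix j
          show "norm ((c I + t *\<^sub>R axis i 1 - a) $ j) \<le> norm ((b - a) $ j)"
            using insert(2) th unfolding c_def h_def by (auto simp: axis_def)
        qed
        then show ?thesis using bnd by simp
      qed
      have "norm (\<phi> h - \<phi> 0) \<le> L * norm (h - 0)"
        by (rule field_differentiable_bound[of "closed_segment 0 h"])
           (auto intro: has_field_derivative_at_within dphi dbnd)
      then have st: "\<bar>f (c (insert i I)) - f (c I)\<bar> \<le> L * \<bar>b$i - a$i\<bar>"
        unfolding \<phi>_def ci h_def by simp
      have "\<bar>f (c (insert i I)) - f a\<bar> \<le> \<bar>f (c (insert i I)) - f (c I)\<bar> + \<bar>f (c I) - f a\<bar>" by simp
      also have "\<dots> \<le> L * \<bar>b$i - a$i\<bar> + L * (\<Sum>i\<in>I. \<bar>b$i - a$i\<bar>)" using st insert(3) by simp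
      also have "\<dots> = L * (\<Sum>i\<in>insert i I. \<bar>b$i - a$i\<bar>)" using insert(1,2) by (simp add: algebra_simps)
      finally show ?case .
    qed
  qed
  have "c UNIV = b" unfolding c_def by (simp add: vec_eq_iff)
  then have "\<bar>f b - f a\<bar> \<le> L * (\<Sum>i\<in>UNIV. \<bar>b$i - a$i\<bar>)" using main[of UNIV] by simp
  also have "\<dots> \<le> L * (\<Sum>i\<in>(UNIV::'n set). norm (b - a))"
    using L0 by (intro mult_left_mono sum_mono) (metis component_le_norm_cart vector_minus_component)
  also have "\<dots> = L * real CARD('n) * norm (b - a)" by simp
  finally show ?thesis .
qed

lemma split_sum:
  fixes a b g :: "nat \<Rightarrow> real" and n N :: nat
  assumes "\<And>k. 0 \<le> a k" "\<And>k. 0 \<le> b k" "\<And>k. k \<ge> 1 \<Longrightarrow> g k \<le> (if k \<le> n then a k else b k)"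
  shows "(\<Sum>k\<in>{1..N}. g k) \<le> (\<Sum>k\<in>{1..n}. a k) + (\<Sum>k\<in>{n<..N}. b k)"
proof -
  have "(\<Sum>k\<in>{1..N}. g k) \<le> (\<Sum>k\<in>{1..N}. (if k \<le> n then a k else 0) + (if n < k then b k else 0))"
  proof (rule sum_mono)
    fix k assume "k \<in> {1..N}"
    then show "g k \<le> (if k \<le> n then a k else 0) + (if n < k then b k else 0)"
      using assms(3)[of k] by (auto split: if_splits)
  qed
  also have "\<dots> = (\<Sum>k\<in>{1..N}. (if k \<le> n then a k else 0)) + (\<Sum>k\<in>{1..N}. (if n < k then b k else 0))"
    by (rule sum.distrib)
  also have "(\<Sum>k\<in>{1..N}. (if k \<le> n then a k else 0)) = (\<Sum>k\<in>{1..N} \<inter> {k. k \<le> n}. a k)"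
    by (simp add: sum.inter_restrict)
  also have "\<dots> \<le> (\<Sum>k\<in>{1..n}. a k)" using assms by (intro sum_mono2) auto
  also have "(\<Sum>k\<in>{1..N}. (if n < k then b k else 0)) = (\<Sum>k\<in>{1..N} \<inter> {k. n < k}. b k)"
    by (simp add: sum.inter_restrict)
  also have "{1..N} \<inter> {k. n < k} = {n<..N}" by auto
  finally show ?thesis by simp
qed

definition Kz :: "'n::finite itself \<Rightarrow> real \<Rightarrow> real" where
  "Kz _ \<gamma> = Sc TYPE('n) * real CARD('n)^2 * ((1 + 1/(2-\<gamma>)) + 1/\<gamma>)"

lemma Kz_nonneg: "0 < \<gamma> \<Longrightarrow> \<gamma> < 2 \<Longrightarrow> 0 \<le> Kz TYPE('n::finite) \<gamma>"
  unfolding Kz_def using Sc_pos[where 'n='n] by simp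

lemma z_sum:
  fixes \<gamma> :: real and n :: nat and Z :: "(real^'n::finite) set"
  assumes g: "0 < \<gamma>" "\<gamma> < 2" and n: "n \<ge> 1" and Z: "finite Z" "Z \<subseteq> lattice"
  shows "(\<Sum>z\<in>Z. min (norm z ^ 2 / real n ^ 2) 1 * norm z powr (-(real CARD('n) + \<gamma>)))
          \<le> Kz TYPE('n) \<gamma> * real n powr (-\<gamma>)"
proof -
  let ?d = "real CARD('n)"
  define F where "F k = min (?d^2 * real k^2 / real n^2) 1 * real k powr (-(?d + \<gamma>))" for k :: nat
  have F0: "F k \<ge> 0" for k unfolding F_def by simp
  have tm: "min (norm z ^ 2 / real n ^ 2) 1 * norm z powr (-(?d + \<gamma>)) \<le> F (km z)" if z: "z \<in> lattice" for z :: "real^'n"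
  proof (cases "z = 0")
    case True then show ?thesis using F0 by simp
  next
    case False
    have m: "real (km z) = mx z" using km_real[OF z] .
    have mpos: "mx z > 0" using False mx_zero_iff mx_nonneg by (metis order_le_less)
    have nz: "norm z \<le> ?d * mx z" using norm_le_mx[of z] by simp
    have mz: "mx z \<le> norm z" by (rule mx_le_norm)
    have "norm z ^ 2 / real n ^ 2 \<le> ?d^2 * mx z^2 / real n^2"
    proof -
      have "norm z ^ 2 \<le> (?d * mx z)^2" using nz by (intro power_mono) auto
      then show ?thesis by (simp add: divide_right_mono power_mult_distrib)
    qed
    then have a: "min (norm z ^ 2 / real n ^ 2) 1 \<le> min (?d^2 * mx z^2 / real n^2) 1" by simp
    have b: "norm z powr (-(?d + \<gamma>)) \<le> mx z powr (-(?d + \<gamma>))"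
      using mpos mz g by (intro powr_mono2') auto
    show ?thesis unfolding F_def m using a b by (intro mult_mono) auto
  qed
  obtain N where N: "(\<Sum>z\<in>Z. F (km z)) \<le> F 0 + (\<Sum>k\<in>{1..N}. Sc TYPE('n) * real k ^ (CARD('n) - 1) * F k)"
    using shell_sum[of F, OF F0 Z] by blast
  have F00: "F 0 = 0" unfolding F_def by simp
  define a where "a k = ?d^2 * (real k powr (1 - \<gamma>) / real n^2)" for k :: nat
  define b where "b k = ?d^2 * real k powr (-1 - \<gamma>)" for k :: nat
  have kb: "real k ^ (CARD('n) - 1) * F k \<le> (if k \<le> n then a k else b k)" if k: "k \<ge> 1" for k
  proof -
    have kp: "real k > 0" using k by simp
    have d1: "real (CARD('n) - 1) = ?d - 1" by (simp add: of_nat_diff)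
    have pw: "real k ^ (CARD('n) - 1) * real k powr (-(?d + \<gamma>)) = real k powr (-1 - \<gamma>)"
      using kp by (simp add: powr_realpow[symmetric] powr_add[symmetric] d1)
    have pk: "real k ^ (CARD('n) - 1) \<ge> 0" by simp
    show ?thesis
    proof (cases "k \<le> n")
      case True
      have "F k \<le> (?d^2 * real k^2 / real n^2) * real k powr (-(?d + \<gamma>))"
        unfolding F_def by (intro mult_right_mono) auto
      then have "real k ^ (CARD('n) - 1) * F k \<le> real k ^ (CARD('n) - 1) * ((?d^2 * real k^2 / real n^2) * real k powr (-(?d + \<gamma>)))"
        using pk by (rule mult_left_mono)
      also have "\<dots> = ?d^2 / real n^2 * (real k^2 * (real k ^ (CARD('n) - 1) * real k powr (-(?d + \<gamma>))))"
        by (simp add: field_simps)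
      also have "\<dots> = ?d^2 / real n^2 * (real k ^ 2 * real k powr (-1 - \<gamma>))"
        unfolding pw by simp
      also have "\<dots> = a k"
      proof -
        have e: "real k ^ 2 = real k powr (real 2)" using kp powr_realpow[of "real k" 2] by simp
        have "real k ^ 2 * real k powr (-1 - \<gamma>) = real k powr (real 2 + (-1 - \<gamma>))"
          unfolding e by (rule powr_add[symmetric])
        also have "real 2 + (-1 - \<gamma>) = 1 - \<gamma>" by simp
        finally show ?thesis unfolding a_def by simp
      qed
      finally show ?thesis using True by simp
    next
      case False
      have "F k \<le> 1 * real k powr (-(?d + \<gamma>))"
        unfolding F_def by (intro mult_right_mono) auto
      then have "real k ^ (CARD('n) - 1) * F k \<le> real k ^ (CARD('n) - 1) * real k powr (-(?d + \<gamma>))"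
        using pk by (simp add: mult_left_mono)
      also have "\<dots> = real k powr (-1 - \<gamma>)" by (rule pw)
      also have "\<dots> \<le> b k" unfolding b_def
      proof -
        have "1 \<le> ?d^2" by simp
        then show "real k powr (-1 - \<gamma>) \<le> ?d^2 * real k powr (-1 - \<gamma>)"
          using mult_right_mono[of 1 "?d^2" "real k powr (-1 - \<gamma>)"] by simp
      qed
      finally show ?thesis using False by simp
    qed
  qed
  have sumN: "(\<Sum>k\<in>{1..N}. Sc TYPE('n) * real k ^ (CARD('n) - 1) * F k)
      \<le> Sc TYPE('n) * ((\<Sum>k\<in>{1..n}. a k) + (\<Sum>k\<in>{n<..N}. b k))"
  proof -
    have "(\<Sum>k\<in>{1..N}. Sc TYPE('n) * real k ^ (CARD('n) - 1) * F k) = Sc TYPE('n) * (\<Sum>k\<in>{1..N}. real k ^ (CARD('n) - 1) * F k)"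
      by (simp add: sum_distrib_left mult.assoc)
    also have "\<dots> \<le> Sc TYPE('n) * ((\<Sum>k\<in>{1..n}. a k) + (\<Sum>k\<in>{n<..N}. b k))"
      using Sc_pos[where 'n='n] by (intro mult_left_mono split_sum kb) (auto simp: a_def b_def)
    finally show ?thesis .
  qed
  have sa: "(\<Sum>k\<in>{1..n}. a k) \<le> ?d^2 * ((1 + 1/(2-\<gamma>)) * real n powr (-\<gamma>))"
  proof -
    have "(\<Sum>k\<in>{1..n}. a k) = ?d^2 / real n^2 * (\<Sum>k\<in>{1..n}. real k powr (1 - \<gamma>))"
      unfolding a_def by (simp add: sum_distrib_left sum_divide_distrib[symmetric])
    also have "\<dots> \<le> ?d^2 / real n^2 * ((1 + 1/(2-\<gamma>)) * real n powr (2 - \<gamma>))"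
      by (intro mult_left_mono T1 g) auto
    also have "\<dots> = ?d^2 * ((1 + 1/(2-\<gamma>)) * (real n powr (2 - \<gamma>) / real n powr 2))"
      using n by (simp add: powr_realpow field_simps)
    also have "real n powr (2 - \<gamma>) / real n powr 2 = real n powr (-\<gamma>)"
      using powr_diff[of "real n" "2-\<gamma>" 2] by simp
    finally show ?thesis .
  qed
  have sb: "(\<Sum>k\<in>{n<..N}. b k) \<le> ?d^2 * (real n powr (-\<gamma>) / \<gamma>)"
  proof -
    have "(\<Sum>k\<in>{n<..N}. b k) = ?d^2 * (\<Sum>k\<in>{n<..N}. real k powr (-1 - \<gamma>))"
      unfolding b_def by (simp add: sum_distrib_left)
    also have "\<dots> \<le> ?d^2 * (real n powr (-\<gamma>) / \<gamma>)"
      using T2[OF g(1) n, of N] by (intro mult_left_mono) auto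
    finally show ?thesis .
  qed
  have "(\<Sum>z\<in>Z. min (norm z ^ 2 / real n ^ 2) 1 * norm z powr (-(?d + \<gamma>))) \<le> (\<Sum>z\<in>Z. F (km z))"
    using Z tm by (intro sum_mono) auto
  also have "\<dots> \<le> Sc TYPE('n) * ((\<Sum>k\<in>{1..n}. a k) + (\<Sum>k\<in>{n<..N}. b k))" using N sumN F00 by simp
  also have "\<dots> \<le> Sc TYPE('n) * (?d^2 * ((1 + 1/(2-\<gamma>)) * real n powr (-\<gamma>)) + ?d^2 * (real n powr (-\<gamma>) / \<gamma>))"
    using Sc_pos[where 'n='n] sa sb by (intro mult_left_mono add_mono) auto
  also have "\<dots> = Kz TYPE('n) \<gamma> * real n powr (-\<gamma>)" unfolding Kz_def by (simp add: field_simps)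
  finally show ?thesis .
qed

lemma lattice_diff: "x \<in> lattice \<Longrightarrow> y \<in> lattice \<Longrightarrow> y - x \<in> lattice"
  unfolding lattice_def by auto

lemma dsum_bound:
  fixes \<gamma> :: real and n :: nat and H :: "real \<Rightarrow> real^'n::finite \<Rightarrow> real" and \<Phi> :: "real^'n \<Rightarrow> real"
  assumes g: "0 < \<gamma>" "\<gamma> < 2" and n: "n \<ge> 1" and A0: "0 \<le> A"
    and Phi0: "\<And>u. 0 \<le> \<Phi> u"
    and PhiS: "\<And>X. finite X \<Longrightarrow> X \<subseteq> lattice \<Longrightarrow> (\<Sum>x\<in>X. \<Phi> ((1 / real n) *\<^sub>R x)) \<le> A * real n ^ CARD('n)"
    and pair: "\<And>a b. (H s b - H s a)^2 \<le> A * min (norm (b - a)^2) 1 * (\<Phi> a + \<Phi> b)"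
  shows "dsum \<gamma> H n s \<le> ennreal (2 * (A * real n ^ CARD('n)) * (A * \<bar>c_gamma \<gamma> TYPE('n)\<bar> * (Kz TYPE('n) \<gamma> * real n powr (-\<gamma>))))"
proof -
  let ?d = "real CARD('n)"
  define c where "c = \<bar>c_gamma \<gamma> TYPE('n)\<bar>"
  define w where "w z = A * c * (min (norm z ^ 2 / real n ^ 2) 1 * norm z powr (-(?d + \<gamma>)))" for z :: "real^'n"
  define Wb where "Wb = A * c * (Kz TYPE('n) \<gamma> * real n powr (-\<gamma>))"
  have c0: "0 \<le> c" unfolding c_def by simp
  have w0: "0 \<le> w z" for z unfolding w_def using A0 c0 by simp
  have Wb0: "0 \<le> Wb" unfolding Wb_def using A0 c0 Kz_nonneg[OF g, where 'n='n] by simp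
  have wsum: "(\<Sum>z\<in>Z. w z) \<le> Wb" if "finite Z" "Z \<subseteq> lattice" for Z
  proof -
    have "(\<Sum>z\<in>Z. w z) = A * c * (\<Sum>z\<in>Z. min (norm z ^ 2 / real n ^ 2) 1 * norm z powr (-(?d + \<gamma>)))"
      unfolding w_def by (simp add: sum_distrib_left)
    also have "\<dots> \<le> Wb" unfolding Wb_def using A0 c0 z_sum[OF g n that] by (intro mult_left_mono) auto
    finally show ?thesis .
  qed
  define G where "G p = (\<Phi> ((1 / real n) *\<^sub>R fst p) + \<Phi> ((1 / real n) *\<^sub>R snd p)) * w (snd p - fst p)" for p :: "(real^'n) \<times> (real^'n)"
  have G0: "0 \<le> G p" for p unfolding G_def using Phi0 w0 by simp
  have np: "real n > 0" using n by simp
  have tm: "(H s ((1 / real n) *\<^sub>R y) - H s ((1 / real n) *\<^sub>R x))\<^sup>2 * p_gamma \<gamma> (y - x) \<le> G (x, y)" for x y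
  proof -
    have pg: "p_gamma \<gamma> (y - x) \<le> c * norm (y - x) powr (-(?d + \<gamma>))"
      unfolding p_gamma_def c_def by (auto intro: mult_right_mono)
    have nrm: "norm ((1 / real n) *\<^sub>R y - (1 / real n) *\<^sub>R x)^2 = norm (y - x)^2 / real n^2"
    proof -
      have "(1 / real n) *\<^sub>R y - (1 / real n) *\<^sub>R x = (1 / real n) *\<^sub>R (y - x)" by (simp add: algebra_simps)
      then show ?thesis using np by (simp add: power_divide)
    qed
    have pr: "(H s ((1 / real n) *\<^sub>R y) - H s ((1 / real n) *\<^sub>R x))\<^sup>2 \<le> A * min (norm (y - x)^2 / real n^2) 1 * (\<Phi> ((1 / real n) *\<^sub>R x) + \<Phi> ((1 / real n) *\<^sub>R y))"
      using pair[of "(1 / real n) *\<^sub>R y" "(1 / real n) *\<^sub>R x"] unfolding nrm .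
    have "(H s ((1 / real n) *\<^sub>R y) - H s ((1 / real n) *\<^sub>R x))\<^sup>2 * p_gamma \<gamma> (y - x)
        \<le> (H s ((1 / real n) *\<^sub>R y) - H s ((1 / real n) *\<^sub>R x))\<^sup>2 * (c * norm (y - x) powr (-(?d + \<gamma>)))"
      using pg by (intro mult_left_mono) auto
    also have "\<dots> \<le> (A * min (norm (y - x)^2 / real n^2) 1 * (\<Phi> ((1 / real n) *\<^sub>R x) + \<Phi> ((1 / real n) *\<^sub>R y))) * (c * norm (y - x) powr (-(?d + \<gamma>)))"
      using pr c0 by (intro mult_right_mono) auto
    also have "\<dots> = G (x, y)" unfolding G_def w_def by (simp add: algebra_simps)
    finally show ?thesis .
  qed
  have "dsum \<gamma> H n s \<le> (\<Sum>\<^sub>\<infinity>p \<in> lattice \<times> lattice. ennreal (G p))"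
    unfolding dsum_def
  proof (rule infsum_mono)
    fix p :: "(real^'n) \<times> (real^'n)" assume "p \<in> lattice \<times> lattice"
    then obtain x y where p: "p = (x, y)" by auto
    show "(case p of (x, y) \<Rightarrow> ennreal ((H s ((1 / real n) *\<^sub>R y) - H s ((1 / real n) *\<^sub>R x))\<^sup>2 * p_gamma \<gamma> (y - x))) \<le> ennreal (G p)"
      unfolding p using tm[of y x] by (simp add: ennreal_leI)
  qed (rule nonneg_summable_on_complete, simp)+
  also have "\<dots> \<le> ennreal (2 * (A * real n ^ CARD('n)) * Wb)"
  proof (rule infsum_le_finite_sums)
    fix F :: "((real^'n) \<times> (real^'n)) set" assume F: "finite F" "F \<subseteq> lattice \<times> lattice"
    define X where "X = fst ` F"
    define Y where "Y = snd ` F"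
    have X: "finite X" "X \<subseteq> lattice" using F unfolding X_def by auto
    have Y: "finite Y" "Y \<subseteq> lattice" using F unfolding Y_def by auto
    have FXY: "F \<subseteq> X \<times> Y" unfolding X_def Y_def by force
    have "(\<Sum>p\<in>F. G p) \<le> (\<Sum>p\<in>X \<times> Y. G p)"
      using X Y FXY G0 by (intro sum_mono2) auto
    also have "\<dots> = (\<Sum>x\<in>X. \<Sum>y\<in>Y. G (x, y))" by (simp add: sum.cartesian_product)
    also have "\<dots> = (\<Sum>x\<in>X. \<Sum>y\<in>Y. \<Phi> ((1 / real n) *\<^sub>R x) * w (y - x)) + (\<Sum>x\<in>X. \<Sum>y\<in>Y. \<Phi> ((1 / real n) *\<^sub>R y) * w (y - x))"
      unfolding G_def by (simp add: distrib_right sum.distrib)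
    also have "(\<Sum>x\<in>X. \<Sum>y\<in>Y. \<Phi> ((1 / real n) *\<^sub>R x) * w (y - x)) \<le> A * real n ^ CARD('n) * Wb"
    proof -
      have "(\<Sum>x\<in>X. \<Sum>y\<in>Y. \<Phi> ((1 / real n) *\<^sub>R x) * w (y - x)) = (\<Sum>x\<in>X. \<Phi> ((1 / real n) *\<^sub>R x) * (\<Sum>y\<in>Y. w (y - x)))"
        by (simp add: sum_distrib_left)
      also have "\<dots> \<le> (\<Sum>x\<in>X. \<Phi> ((1 / real n) *\<^sub>R x) * Wb)"
      proof (rule sum_mono, rule mult_left_mono)
        fix x assume x: "x \<in> X"
        have "(\<Sum>y\<in>Y. w (y - x)) = (\<Sum>z\<in>(\<lambda>y. y - x) ` Y. w z)"
          by (subst sum.reindex) (auto simp: inj_on_def)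
        also have "\<dots> \<le> Wb" using X Y x by (intro wsum) (auto intro: lattice_diff)
        finally show "(\<Sum>y\<in>Y. w (y - x)) \<le> Wb" .
      qed (simp add: Phi0)
      also have "\<dots> = (\<Sum>x\<in>X. \<Phi> ((1 / real n) *\<^sub>R x)) * Wb" by (simp add: sum_distrib_right)
      also have "\<dots> \<le> A * real n ^ CARD('n) * Wb" using PhiS[OF X] Wb0 by (intro mult_right_mono)
      finally show ?thesis .
    qed
    also have "(\<Sum>x\<in>X. \<Sum>y\<in>Y. \<Phi> ((1 / real n) *\<^sub>R y) * w (y - x)) \<le> A * real n ^ CARD('n) * Wb"
    proof -
      have "(\<Sum>x\<in>X. \<Sum>y\<in>Y. \<Phi> ((1 / real n) *\<^sub>R y) * w (y - x)) = (\<Sum>y\<in>Y. \<Sum>x\<in>X. \<Phi> ((1 / real n) *\<^sub>R y) * w (y - x))"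
        by (rule sum.swap)
      also have "\<dots> = (\<Sum>y\<in>Y. \<Phi> ((1 / real n) *\<^sub>R y) * (\<Sum>x\<in>X. w (x - y)))"
        by (simp add: sum_distrib_left w_def norm_minus_commute)
      also have "\<dots> \<le> (\<Sum>y\<in>Y. \<Phi> ((1 / real n) *\<^sub>R y) * Wb)"
      proof (rule sum_mono, rule mult_left_mono)
        fix y assume y: "y \<in> Y"
        have "(\<Sum>x\<in>X. w (x - y)) = (\<Sum>z\<in>(\<lambda>x. x - y) ` X. w z)"
          by (subst sum.reindex) (auto simp: inj_on_def)
        also have "\<dots> \<le> Wb" using X Y y by (intro wsum) (auto intro: lattice_diff)
        finally show "(\<Sum>x\<in>X. w (x - y)) \<le> Wb" .
      qed (simp add: Phi0)
      also have "\<dots> = (\<Sum>y\<in>Y. \<Phi> ((1 / real n) *\<^sub>R y)) * Wb" by (simp add: sum_distrib_right)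
      also have "\<dots> \<le> A * real n ^ CARD('n) * Wb" using PhiS[OF Y] Wb0 by (intro mult_right_mono)
      finally show ?thesis .
    qed
    finally have "(\<Sum>p\<in>F. G p) \<le> 2 * (A * real n ^ CARD('n)) * Wb" by (simp add: algebra_simps)
    then show "(\<Sum>p\<in>F. ennreal (G p)) \<le> ennreal (2 * (A * real n ^ CARD('n)) * Wb)"
      using G0 by (simp add: ennreal_leI)
  qed (rule nonneg_summable_on_complete, simp)
  finally show ?thesis unfolding Wb_def c_def by (simp add: mult.assoc)
qed

lemma cont_bound:
  fixes f :: "'a::topological_space \<Rightarrow> 'b::real_normed_vector"
  assumes "continuous_on S f" "compact S"
  shows "\<exists>M\<ge>0. \<forall>x\<in>S. norm (f x) \<le> M"
proof -
  have "compact (f ` S)" by (rule compact_continuous_image[OF assms(1) assms(2)])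
  then have "bounded (f ` S)" by (rule compact_imp_bounded)
  then obtain M where "\<forall>y\<in>f ` S. norm y \<le> M" unfolding bounded_iff by blast
  then show ?thesis by (intro exI[of _ "max M 0"]) auto
qed

lemma compact_case:
  fixes H :: "real \<Rightarrow> real^'n::finite \<Rightarrow> real"
  assumes "C12c T H"
  shows "\<exists>A \<Phi>. 0 \<le> A \<and> (\<forall>u. 0 \<le> \<Phi> u)
    \<and> (\<forall>n::nat. n \<ge> 1 \<longrightarrow> (\<forall>X. finite X \<and> X \<subseteq> lattice \<longrightarrow> (\<Sum>x\<in>X. \<Phi> ((1 / real n) *\<^sub>R x)) \<le> A * real n ^ CARD('n)))
    \<and> (\<forall>s\<in>{0..T}. \<forall>a b. (H s b - H s a)^2 \<le> A * min (norm (b - a)^2) 1 * (\<Phi> a + \<Phi> b))"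
proof -
  let ?d = "real CARD('n)"
  obtain Ht D1 D2 where W: "C12_wit T H Ht D1 D2" using assms unfolding C12c_def C12_def by blast
  obtain K where K: "compact K" "\<And>s u. s \<in> {0..T} \<Longrightarrow> u \<notin> K \<Longrightarrow> H s u = 0"
    using assms unfolding C12c_def by blast
  obtain R1 where R1: "\<forall>x\<in>K. norm x \<le> R1" using compact_imp_bounded[OF K(1)] unfolding bounded_iff by blast
  define R0 where "R0 = max R1 0"
  have R0: "R0 \<ge> 0" "\<And>x. x \<in> K \<Longrightarrow> norm x \<le> R0" using R1 unfolding R0_def by force+
  have cH: "continuous_on ({0..T} \<times> UNIV) (\<lambda>p. H (fst p) (snd p))" using W unfolding C12_wit_def by blast
  obtain M where M: "M \<ge> 0" "\<forall>p\<in>{0..T} \<times> cball 0 R0. norm (H (fst p) (snd p)) \<le> M"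
    using cont_bound[OF continuous_on_subset[OF cH] compact_Times[OF compact_Icc compact_cball]]
    by blast
  have HM: "\<bar>H s u\<bar> \<le> M" if s: "s \<in> {0..T}" for s u
  proof (cases "u \<in> K")
    case True then show ?thesis using M(2) R0(2)[OF True] s by force
  next
    case False then show ?thesis using K(2)[OF s False] M(1) by simp
  qed
  have cD: "continuous_on ({0..T} \<times> UNIV) (\<lambda>p. \<Sum>i\<in>UNIV. \<bar>D1 i (fst p) (snd p)\<bar>)"
    using W unfolding C12_wit_def by (intro continuous_intros) auto
  obtain L where L: "L \<ge> 0" "\<forall>p\<in>{0..T} \<times> cball 0 (R0 + 2). norm (\<Sum>i\<in>UNIV. \<bar>D1 i (fst p) (snd p)\<bar>) \<le> L"
    using cont_bound[OF continuous_on_subset[OF cD] compact_Times[OF compact_Icc compact_cball]]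
    by blast
  have DL: "\<bar>D1 i s w\<bar> \<le> L" if "s \<in> {0..T}" "norm w \<le> R0 + 2" for i s w
  proof -
    have "\<bar>D1 i s w\<bar> \<le> (\<Sum>i\<in>UNIV. \<bar>D1 i s w\<bar>)" by (rule member_le_sum) auto
    also have "\<dots> \<le> L" using L(2) that by force
    finally show ?thesis .
  qed
  define \<Phi> where "\<Phi> u = (if mx u \<le> R0 then 1 else (0::real))" for u :: "real^'n"
  define A where "A = 4 * M^2 + (L * ?d)^2 + (2 * R0 + 1) ^ CARD('n)"
  have A0: "0 \<le> A" unfolding A_def using R0 by simp
  have PhiK: "\<Phi> u = 1" if "u \<in> K" for u
    using R0(2)[OF that] mx_le_norm[of u] unfolding \<Phi>_def by simp
  have PhiS: "(\<Sum>x\<in>X. \<Phi> ((1 / real n) *\<^sub>R x)) \<le> A * real n ^ CARD('n)"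
    if n: "n \<ge> 1" and X: "finite X" "X \<subseteq> lattice" for n :: nat and X
  proof -
    define N where "N = nat \<lfloor>R0 * real n\<rfloor>"
    have np: "real n > 0" using n by simp
    have NR: "real N \<le> R0 * real n" unfolding N_def using R0(1) np by simp
    have eq: "\<Phi> ((1 / real n) *\<^sub>R x) = (if x \<in> cube N then 1 else 0)" if x: "x \<in> lattice" for x
    proof -
      have "mx ((1 / real n) *\<^sub>R x) = mx x / real n" using np by (simp add: mx_scale)
      then have "mx ((1 / real n) *\<^sub>R x) \<le> R0 \<longleftrightarrow> mx x \<le> R0 * real n" using np by (simp add: divide_le_eq)
      also have "\<dots> \<longleftrightarrow> km x \<le> N"
      proof -
        have "mx x \<le> R0 * real n \<longleftrightarrow> int (km x) \<le> \<lfloor>R0 * real n\<rfloor>"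
          unfolding le_floor_iff using km_real[OF x] by simp
        also have "\<dots> \<longleftrightarrow> km x \<le> N"
        proof -
          have "0 \<le> \<lfloor>R0 * real n\<rfloor>" using R0(1) np by simp
          then show ?thesis unfolding N_def by (simp add: le_nat_iff)
        qed
        finally show ?thesis .
      qed
      finally show ?thesis unfolding \<Phi>_def cube_km using x by auto
    qed
    have "(\<Sum>x\<in>X. \<Phi> ((1 / real n) *\<^sub>R x)) = (\<Sum>x\<in>X. (if x \<in> cube N then 1 else 0))"
      using X eq by (intro sum.cong) auto
    also have "\<dots> = real (card (X \<inter> cube N))" using X by (simp add: sum.inter_restrict[symmetric] Int_def)
    also have "\<dots> \<le> real (card (cube N :: (real^'n) set))" by (simp add: card_mono[OF finite_cube])
    also have "\<dots> = (2 * real N + 1) ^ CARD('n)" by (simp add: card_cube add.commute)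
    also have "\<dots> \<le> ((2 * R0 + 1) * real n) ^ CARD('n)"
      using NR n by (intro power_mono) (auto simp: algebra_simps)
    also have "\<dots> = (2 * R0 + 1) ^ CARD('n) * real n ^ CARD('n)" by (simp add: power_mult_distrib)
    also have "\<dots> \<le> A * real n ^ CARD('n)" unfolding A_def using R0 M L by (intro mult_right_mono) auto
    finally show ?thesis .
  qed
  have pair: "(H s b - H s a)^2 \<le> A * min (norm (b - a)^2) 1 * (\<Phi> a + \<Phi> b)" if s: "s \<in> {0..T}" for s a b
  proof (cases "a \<in> K \<or> b \<in> K")
    case False
    then show ?thesis using K(2)[OF s] A0 unfolding \<Phi>_def by simp
  next
    case True
    have P0: "\<Phi> a \<ge> 0" "\<Phi> b \<ge> 0" unfolding \<Phi>_def by auto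
    have P1: "\<Phi> a + \<Phi> b \<ge> 1" using True PhiK[of a] PhiK[of b] P0 by auto
    have key: "(H s b - H s a)^2 \<le> A * min (norm (b - a)^2) 1"
    proof (cases "norm (b - a) \<ge> 1")
      case True
      have "(H s b - H s a)^2 \<le> (2 * M)^2"
      proof -
        have "\<bar>H s b - H s a\<bar> \<le> 2 * M" using HM[OF s, of a] HM[OF s, of b] by linarith
        then show ?thesis by (metis abs_ge_zero power2_abs power_mono)
      qed
      also have "\<dots> \<le> A" unfolding A_def using R0(1) by (simp add: power_mult_distrib)
      also have "\<dots> = A * min (norm (b - a)^2) 1"
      proof -
        have "norm (b - a)^2 \<ge> 1" using True by (metis one_le_power)
        then show ?thesis by simp
      qed
      finally show ?thesis .
    next
      case False
      have bd: "\<bar>D1 i s w\<bar> \<le> L" if w: "norm (w - a) \<le> norm (b - a)" for i w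
      proof (rule DL[OF s])
        show "norm w \<le> R0 + 2"
        proof (cases "a \<in> K")
          case True
          have "norm w \<le> norm a + norm (w - a)" by (metis norm_triangle_sub add.commute)
          then show ?thesis using R0(2)[OF True] w False by linarith
        next
          case aK: False
          then have bK: "b \<in> K" using \<open>a \<in> K \<or> b \<in> K\<close> by blast
          have "norm w \<le> norm b + norm (b - a) + norm (w - a)"
          proof -
            have "w = b - (b - a) + (w - a)" by simp
            then have "norm w \<le> norm (b - (b - a)) + norm (w - a)" by (metis norm_triangle_ineq)
            moreover have "norm (b - (b - a)) \<le> norm b + norm (b - a)" by (rule norm_triangle_ineq4)
            ultimately show ?thesis by linarith
          qed
          then show ?thesis using R0(2)[OF bK] w False by linarith
        qed
      qed
      have sd: "\<forall>i. sderiv i (H s) (D1 i s)" using W s unfolding C12_wit_def by blast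
      have "\<bar>H s b - H s a\<bar> \<le> L * ?d * norm (b - a)"
        by (rule path_bound[of "H s" "\<lambda>i. D1 i s"]) (use sd bd in auto)
      then have "(H s b - H s a)^2 \<le> (L * ?d * norm (b - a))^2"
        by (metis abs_ge_zero power2_abs power_mono)
      also have "\<dots> = (L * ?d)^2 * norm (b - a)^2" by (simp add: power_mult_distrib)
      also have "\<dots> \<le> A * norm (b - a)^2" unfolding A_def using R0 M by (intro mult_right_mono) auto
      also have "\<dots> = A * min (norm (b - a)^2) 1"
      proof -
        have "norm (b - a)^2 \<le> 1" using False by (simp add: power_le_one)
        then show ?thesis by simp
      qed
      finally show ?thesis .
    qed
    also have "\<dots> \<le> A * min (norm (b - a)^2) 1 * (\<Phi> a + \<Phi> b)"
    proof -
      have "0 \<le> A * min (norm (b - a)^2) 1" using A0 by simp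
      then show ?thesis using mult_left_mono[OF P1, of "A * min (norm (b - a)^2) 1"] by simp
    qed
    finally show ?thesis .
  qed
  show ?thesis
    apply (rule exI[of _ A], rule exI[of _ \<Phi>])
    using A0 PhiS pair unfolding \<Phi>_def by auto
qed

lemma S12_case:
  fixes H :: "real \<Rightarrow> real^'n::finite \<Rightarrow> real"
  assumes "S12 T H" and d1: "CARD('n) = 1"
  shows "\<exists>A \<Phi>. 0 \<le> A \<and> (\<forall>u. 0 \<le> \<Phi> u)
    \<and> (\<forall>n::nat. n \<ge> 1 \<longrightarrow> (\<forall>X. finite X \<and> X \<subseteq> lattice \<longrightarrow> (\<Sum>x\<in>X. \<Phi> ((1 / real n) *\<^sub>R x)) \<le> A * real n ^ CARD('n)))
    \<and> (\<forall>s\<in>{0..T}. \<forall>a b. (H s b - H s a)^2 \<le> A * min (norm (b - a)^2) 1 * (\<Phi> a + \<Phi> b))"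
proof -
  let ?d = "real CARD('n)"
  obtain Gt :: "real \<Rightarrow> real^'n \<Rightarrow> real" and D1 E1 :: "'n \<Rightarrow> real \<Rightarrow> real^'n \<Rightarrow> real"
    and D2 E2 :: "'n \<Rightarrow> 'n \<Rightarrow> real \<Rightarrow> real^'n \<Rightarrow> real" where W: "C12_wit T H Gt D1 D2"
    and Bd: "\<forall>k::nat. \<exists>B. \<forall>s\<in>{0..T}. \<forall>u.
        norm u ^ k * (\<bar>H s u\<bar> + (\<Sum>j\<in>UNIV. \<bar>D1 j s u\<bar>) + (\<Sum>i\<in>UNIV. \<Sum>j\<in>UNIV. \<bar>D2 i j s u\<bar>)
          + \<bar>Gt s u\<bar> + (\<Sum>j\<in>UNIV. \<bar>E1 j s u\<bar>) + (\<Sum>i\<in>UNIV. \<Sum>j\<in>UNIV. \<bar>E2 i j s u\<bar>)) \<le> B"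
    using assms(1) unfolding S12_def by blast
  define Q where "Q s u = \<bar>H s u\<bar> + (\<Sum>j\<in>UNIV. \<bar>D1 j s u\<bar>) + (\<Sum>i\<in>UNIV. \<Sum>j\<in>UNIV. \<bar>D2 i j s u\<bar>)
          + \<bar>Gt s u\<bar> + (\<Sum>j\<in>UNIV. \<bar>E1 j s u\<bar>) + (\<Sum>i\<in>UNIV. \<Sum>j\<in>UNIV. \<bar>E2 i j s u\<bar>)" for s u
  obtain B0 where B0: "\<forall>s\<in>{0..T}. \<forall>u. norm u ^ 0 * Q s u \<le> B0" using Bd unfolding Q_def by blast
  obtain B2 where B2: "\<forall>s\<in>{0..T}. \<forall>u. norm u ^ 2 * Q s u \<le> B2" using Bd unfolding Q_def by blast
  define B where "B = 2 * (\<bar>B0\<bar> + \<bar>B2\<bar>)"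
  define \<Phi> where "\<Phi> u = 1 / (1 + norm u)^2" for u :: "real^'n"
  have onep: "0 < 1 + norm u" for u :: "real^'n" using norm_ge_zero[of u] by linarith
  have Phi0: "0 \<le> \<Phi> u" "\<Phi> u \<le> 1" for u
  proof -
    have p: "0 < 1 + norm u" using norm_ge_zero[of u] by linarith
    have "1 \<le> (1 + norm u)^2" using one_le_power[of "1 + norm u" 2] by simp
    then have "1 / (1 + norm u)^2 \<le> 1 / 1" using p by (intro divide_left_mono) auto
    then show "0 \<le> \<Phi> u" "\<Phi> u \<le> 1" unfolding \<Phi>_def using p by auto
  qed
  have Q0: "\<bar>H s u\<bar> \<le> Q s u" "\<bar>D1 i s u\<bar> \<le> Q s u" for s u i
  proof -
    have a: "0 \<le> (\<Sum>i\<in>UNIV. \<Sum>j\<in>UNIV. \<bar>D2 i j s u\<bar>)" "0 \<le> (\<Sum>j\<in>UNIV. \<bar>E1 j s u\<bar>)"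
      "0 \<le> (\<Sum>i\<in>UNIV. \<Sum>j\<in>UNIV. \<bar>E2 i j s u\<bar>)" "0 \<le> (\<Sum>j\<in>UNIV. \<bar>D1 j s u\<bar>)"
      by (auto intro: sum_nonneg)
    have b: "\<bar>D1 i s u\<bar> \<le> (\<Sum>j\<in>UNIV. \<bar>D1 j s u\<bar>)" by (rule member_le_sum) auto
    show "\<bar>H s u\<bar> \<le> Q s u" unfolding Q_def using a abs_ge_zero[of "Gt s u"] by linarith
    show "\<bar>D1 i s u\<bar> \<le> Q s u" unfolding Q_def using a b abs_ge_zero[of "H s u"] abs_ge_zero[of "Gt s u"] by linarith
  qed
  have QB: "Q s u \<le> B * \<Phi> u" if s: "s \<in> {0..T}" for s u
  proof -
    have q0: "0 \<le> Q s u" using Q0(1)[of s u] by linarith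
    have "(1 + norm u)^2 \<le> 2 * (1 + norm u ^ 2)"
    proof -
      have "2 * (1 + norm u ^ 2) - (1 + norm u)^2 = (norm u - 1)^2" by (simp add: power2_eq_square algebra_simps)
      then show ?thesis using zero_le_power2[of "norm u - 1"] by linarith
    qed
    then have "(1 + norm u)^2 * Q s u \<le> 2 * (1 + norm u ^ 2) * Q s u" using q0 by (rule mult_right_mono)
    also have "\<dots> = 2 * (norm u ^ 0 * Q s u + norm u ^ 2 * Q s u)" by (simp add: algebra_simps)
    also have "\<dots> \<le> B" unfolding B_def using B0 B2 s
      by (intro mult_left_mono add_mono) (auto intro: order_trans[OF _ abs_ge_self])
    finally have "(1 + norm u)^2 * Q s u \<le> B" .
    moreover have "(1 + norm u)^2 > 0" using onep[of u] by simp
    ultimately show ?thesis unfolding \<Phi>_def by (simp add: field_simps)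
  qed
  have Bnn: "0 \<le> B" unfolding B_def by simp
  have HB: "\<bar>H s u\<bar> \<le> B * \<Phi> u" "\<bar>D1 i s u\<bar> \<le> B * \<Phi> u" if "s \<in> {0..T}" for s u i
    using Q0(1)[of s u] Q0(2)[of i s u] QB[OF that, of u] by linarith+
  have PhiW: "\<Phi> w \<le> 4 * \<Phi> a" if "norm (w - a) < 1" for w a :: "real^'n"
  proof -
    have "norm a \<le> norm w + norm (w - a)" by (metis norm_minus_commute norm_triangle_sub add.commute)
    moreover have "0 \<le> norm w" by simp
    ultimately have "1 + norm a \<le> 2 * (1 + norm w)" using that by (smt (verit))
    then have "(1 + norm a)^2 \<le> (2 * (1 + norm w))^2" by (intro power_mono) auto
    moreover have "(2 * (1 + norm w))^2 = 4 * (1 + norm w)^2" by (simp add: power2_eq_square algebra_simps)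
    ultimately have "(1 + norm a)^2 \<le> 4 * (1 + norm w)^2" by linarith
    moreover have "(1 + norm a)^2 > 0" "(1 + norm w)^2 > 0" using onep[of a] onep[of w] by simp_all
    ultimately show ?thesis unfolding \<Phi>_def by (simp add: field_simps)
  qed
  define A where "A = 2 * B^2 + 16 * B^2 * ?d^2 + (1 + Sc TYPE('n))"
  have A0: "0 \<le> A" unfolding A_def using Sc_pos[where 'n='n] by simp
  have pair: "(H s b - H s a)^2 \<le> A * min (norm (b - a)^2) 1 * (\<Phi> a + \<Phi> b)" if s: "s \<in> {0..T}" for s a b
  proof (cases "norm (b - a) \<ge> 1")
    case True
    have m1: "min (norm (b - a)^2) 1 = 1"
    proof -
      have "norm (b - a)^2 \<ge> 1" using True by (metis one_le_power)
      then show ?thesis by simp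
    qed
    have sq: "(x - y)^2 \<le> 2 * x^2 + 2 * y^2" for x y :: real
    proof -
      have "2 * x^2 + 2 * y^2 - (x - y)^2 = (x + y)^2" by (simp add: power2_eq_square algebra_simps)
      then show ?thesis using zero_le_power2[of "x + y"] by linarith
    qed
    have hsq: "(H s u)^2 \<le> B^2 * \<Phi> u" for u
    proof -
      have "(H s u)^2 = \<bar>H s u\<bar>^2" by simp
      also have "\<dots> \<le> (B * \<Phi> u)^2" using HB(1)[OF s, of u] by (intro power_mono) auto
      also have "\<dots> = B^2 * (\<Phi> u * \<Phi> u)" by (simp add: power2_eq_square)
      also have "\<dots> \<le> B^2 * \<Phi> u" using Phi0[of u] by (intro mult_left_mono) (auto simp: mult_le_one mult_left_le)
      finally show ?thesis .
    qed
    have "(H s b - H s a)^2 \<le> 2 * (H s b)^2 + 2 * (H s a)^2" by (rule sq)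
    also have "\<dots> \<le> 2 * (B^2 * \<Phi> b) + 2 * (B^2 * \<Phi> a)" using hsq[of a] hsq[of b] by simp
    also have "\<dots> = (2 * B^2) * (\<Phi> a + \<Phi> b)" by (simp add: algebra_simps)
    also have "\<dots> \<le> A * (\<Phi> a + \<Phi> b)" unfolding A_def using Phi0[of a] Phi0[of b] Sc_pos[where 'n='n]
      by (intro mult_right_mono) auto
    finally show ?thesis unfolding m1 by simp
  next
    case False
    have m1: "min (norm (b - a)^2) 1 = norm (b - a)^2"
    proof -
      have "norm (b - a)^2 \<le> 1" using False by (simp add: power_le_one)
      then show ?thesis by simp
    qed
    have bd: "\<bar>D1 i s w\<bar> \<le> 4 * B * \<Phi> a" if w: "norm (w - a) \<le> norm (b - a)" for i w
    proof -
      have "\<bar>D1 i s w\<bar> \<le> B * \<Phi> w" by (rule HB(2)[OF s])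
      also have "\<dots> \<le> B * (4 * \<Phi> a)" using PhiW[of w a] w False Bnn by (intro mult_left_mono) auto
      finally show ?thesis by simp
    qed
    have sd: "\<forall>i. sderiv i (H s) (D1 i s)" using W s unfolding C12_wit_def by blast
    have "\<bar>H s b - H s a\<bar> \<le> 4 * B * \<Phi> a * ?d * norm (b - a)"
      by (rule path_bound[of "H s" "\<lambda>i. D1 i s"]) (use sd bd in auto)
    then have "(H s b - H s a)^2 \<le> (4 * B * \<Phi> a * ?d * norm (b - a))^2"
      by (metis abs_ge_zero power2_abs power_mono)
    also have "\<dots> = (16 * B^2 * ?d^2 * norm (b - a)^2) * (\<Phi> a * \<Phi> a)" by (simp add: power2_eq_square algebra_simps)
    also have "\<dots> \<le> (16 * B^2 * ?d^2 * norm (b - a)^2) * (\<Phi> a + \<Phi> b)"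
    proof -
      have "\<Phi> a * \<Phi> a \<le> \<Phi> a" using Phi0[of a] by (simp add: mult_left_le)
      then have "\<Phi> a * \<Phi> a \<le> \<Phi> a + \<Phi> b" using Phi0[of b] by linarith
      then show ?thesis by (intro mult_left_mono) auto
    qed
    also have "\<dots> \<le> (A * norm (b - a)^2) * (\<Phi> a + \<Phi> b)"
      unfolding A_def using Phi0[of a] Phi0[of b] Sc_pos[where 'n='n] by (intro mult_right_mono) auto
    finally show ?thesis unfolding m1 .
  qed
  have PhiS: "(\<Sum>x\<in>X. \<Phi> ((1 / real n) *\<^sub>R x)) \<le> A * real n ^ CARD('n)"
    if n: "n \<ge> 1" and X: "finite X" "X \<subseteq> lattice" for n :: nat and X
  proof -
    have np: "real n > 0" using n by simp
    define F where "F k = 1 / (1 + real k / real n)^2" for k :: nat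
    have F0: "0 \<le> F k" for k unfolding F_def by simp
    have le: "\<Phi> ((1 / real n) *\<^sub>R x) \<le> F (km x)" if x: "x \<in> lattice" for x
    proof -
      have "real (km x) / real n \<le> norm ((1 / real n) *\<^sub>R x)"
        using km_real[OF x] mx_le_norm[of x] np by (simp add: divide_right_mono)
      then have "(1 + real (km x) / real n)^2 \<le> (1 + norm ((1 / real n) *\<^sub>R x))^2"
        using np by (intro power_mono) auto
      moreover have "0 < (1 + real (km x) / real n)^2"
      proof -
        have "0 \<le> real (km x) / real n" by simp
        then have "0 < 1 + real (km x) / real n" by linarith
        then show ?thesis by simp
      qed
      moreover have "0 < (1 + norm ((1 / real n) *\<^sub>R x))^2" using onep[of "(1 / real n) *\<^sub>R x"] by simp
      ultimately have "1 / (1 + norm ((1 / real n) *\<^sub>R x))^2 \<le> 1 / (1 + real (km x) / real n)^2"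
        by (intro divide_left_mono mult_pos_pos) auto
      then show ?thesis unfolding \<Phi>_def F_def .
    qed
    obtain N where N: "(\<Sum>x\<in>X. F (km x)) \<le> F 0 + (\<Sum>k\<in>{1..N}. Sc TYPE('n) * real k ^ (CARD('n) - 1) * F k)"
      using shell_sum[of F, OF F0 X] by blast
    have "(\<Sum>x\<in>X. \<Phi> ((1 / real n) *\<^sub>R x)) \<le> (\<Sum>x\<in>X. F (km x))"
      using X le by (intro sum_mono) auto
    also have "\<dots> \<le> 1 + Sc TYPE('n) * (\<Sum>k\<in>{1..N}. F k)"
      using N d1 by (simp add: F_def sum_distrib_left)
    also have "\<dots> \<le> 1 + Sc TYPE('n) * real n"
      using T3[OF n, of N] Sc_pos[where 'n='n] unfolding F_def by (intro add_left_mono mult_left_mono) auto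
    also have "\<dots> \<le> A * real n ^ CARD('n)"
    proof -
      have "1 + Sc TYPE('n) * real n \<le> (1 + Sc TYPE('n)) * real n" using np n by (simp add: algebra_simps)
      also have "\<dots> \<le> A * real n" unfolding A_def using np by (intro mult_right_mono) auto
      finally show ?thesis using d1 by simp
    qed
    finally show ?thesis .
  qed
  show ?thesis
    apply (rule exI[of _ A], rule exI[of _ \<Phi>])
    using A0 Phi0 PhiS pair by auto
qed

lemma part2:
  fixes \<gamma> :: real assumes g: "0 < \<gamma>" "\<gamma> < 2"
  shows "\<exists>C'>0. \<forall>n::nat. n \<ge> 2 \<longrightarrow> (real n + real n powr \<gamma>) / real n ^ 2 \<le> C' * r_n \<gamma> n / real n"
proof (rule exI[of _ "2 + 2 / ln 2"], intro conjI allI impI)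
  have "ln (2::real) > 0" by simp
  then show "0 < 2 + 2 / ln (2::real)" by (intro add_pos_pos) auto
  fix n :: nat assume n: "n \<ge> 2"
  have np: "real n > 0" using n by simp
  have e: "real n powr \<gamma> = real n * real n powr (\<gamma> - 1)"
    using np by (simp add: powr_add[symmetric] powr_mult_base)
  have lhs: "(real n + real n powr \<gamma>) / real n ^ 2 = (1 + real n powr (\<gamma> - 1)) / real n"
    unfolding e using np by (simp add: power2_eq_square field_simps)
  have ln2: "ln (2::real) > 0" by simp
  have key: "1 + real n powr (\<gamma> - 1) \<le> (2 + 2 / ln 2) * r_n \<gamma> n"
  proof (cases "\<gamma> < 1")
    case True
    have "real n powr (\<gamma> - 1) \<le> 1 powr (\<gamma> - 1)" using True n by (intro powr_mono2') auto
    then have "real n powr (\<gamma> - 1) \<le> 1" by simp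
    moreover have "0 \<le> 2 / ln (2::real)" using ln2 by simp
    moreover have "(2 + 2 / ln 2) * r_n \<gamma> n = 2 + 2 / ln 2" unfolding r_n_def using True by simp
    ultimately show ?thesis by linarith
  next
    case False
    show ?thesis
    proof (cases "\<gamma> = 1")
      case True
      have lnn: "ln 2 \<le> ln (real n)" using n by simp
      have "2 = (2 / ln 2) * ln (2::real)" using ln2 by simp
      also have "\<dots> \<le> (2 / ln 2) * ln (real n)" using lnn ln2 by (intro mult_left_mono) auto
      also have "\<dots> \<le> (2 + 2 / ln 2) * ln (real n)" using lnn ln2 by (intro mult_right_mono) linarith+
      finally show ?thesis unfolding r_n_def using True n by simp
    next
      case g1: False
      have r: "r_n \<gamma> n = real n powr (\<gamma> - 1)" unfolding r_n_def using False g1 by simp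
      have "1 \<le> real n powr (\<gamma> - 1)" using False n by (intro ge_one_powr_ge_zero) auto
      then have "1 + real n powr (\<gamma> - 1) \<le> 2 * real n powr (\<gamma> - 1)" by simp
      also have "\<dots> \<le> (2 + 2 / ln 2) * real n powr (\<gamma> - 1)" using ln2 by (intro mult_right_mono) auto
      finally show ?thesis unfolding r .
    qed
  qed
  show "(real n + real n powr \<gamma>) / real n ^ 2 \<le> (2 + 2 / ln 2) * r_n \<gamma> n / real n"
    unfolding lhs using key np by (simp add: divide_right_mono)
qed

lemma main_from_ex:
  fixes T \<gamma> :: real and H :: "real \<Rightarrow> real^'n::finite \<Rightarrow> real" and A :: real and \<Phi> :: "real^'n \<Rightarrow> real"
  assumes "T > 0" and "0 < \<gamma>" and "\<gamma> < 2"
    and A0: "0 \<le> A" and Phi0: "\<forall>u. 0 \<le> \<Phi> u"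
    and PhiS: "\<forall>n::nat. n \<ge> 1 \<longrightarrow> (\<forall>X. finite X \<and> X \<subseteq> lattice \<longrightarrow> (\<Sum>x\<in>X. \<Phi> ((1 / real n) *\<^sub>R x)) \<le> A * real n ^ CARD('n))"
    and pair: "\<forall>s\<in>{0..T}. \<forall>a b. (H s b - H s a)^2 \<le> A * min (norm (b - a)^2) 1 * (\<Phi> a + \<Phi> b)"
  shows "(\<exists>C>0. \<forall>n::nat. n \<ge> 1 \<longrightarrow>
            ennreal (real n powr \<gamma> / real n ^ (2 * CARD('n))) * (SUP s\<in>{0..T}. dsum \<gamma> H n s)
              \<le> ennreal (C * (real n + real n powr \<gamma>) / real n ^ (CARD('n) + 1))
          \<and> C * (real n + real n powr \<gamma>) / real n ^ (CARD('n) + 1)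
              \<le> C * (real n + real n powr \<gamma>) / real n ^ 2)
       \<and> (\<exists>C'>0. \<forall>n::nat. n \<ge> 2 \<longrightarrow>
            (real n + real n powr \<gamma>) / real n ^ 2 \<le> C' * r_n \<gamma> n / real n)"
proof -
  let ?d = "CARD('n)"
  define K where "K = 2 * A * (A * \<bar>c_gamma \<gamma> TYPE('n)\<bar> * Kz TYPE('n) \<gamma>)"
  have K0: "0 \<le> K" unfolding K_def using A0 Kz_nonneg[OF assms(2,3), where 'n='n] by simp
  define C where "C = K + 1"
  have part1: "ennreal (real n powr \<gamma> / real n ^ (2 * ?d)) * (SUP s\<in>{0..T}. dsum \<gamma> H n s)
              \<le> ennreal (C * (real n + real n powr \<gamma>) / real n ^ (?d + 1))
          \<and> C * (real n + real n powr \<gamma>) / real n ^ (?d + 1)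
              \<le> C * (real n + real n powr \<gamma>) / real n ^ 2" if n: "n \<ge> 1" for n :: nat
  proof
    have np: "real n > 0" using n by simp
    have db: "dsum \<gamma> H n s \<le> ennreal (K * (real n ^ ?d * real n powr (-\<gamma>)))" if s: "s \<in> {0..T}" for s
    proof -
      have "dsum \<gamma> H n s \<le> ennreal (2 * (A * real n ^ CARD('n)) * (A * \<bar>c_gamma \<gamma> TYPE('n)\<bar> * (Kz TYPE('n) \<gamma> * real n powr (-\<gamma>))))"
      proof -
        have P0: "\<And>u. 0 \<le> \<Phi> u" using Phi0 by blast
        have PS: "\<And>X. finite X \<Longrightarrow> X \<subseteq> lattice \<Longrightarrow> (\<Sum>x\<in>X. \<Phi> ((1 / real n) *\<^sub>R x)) \<le> A * real n ^ CARD('n)"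
          using PhiS n by blast
        have pr: "\<And>a b. (H s b - H s a)^2 \<le> A * min (norm (b - a)^2) 1 * (\<Phi> a + \<Phi> b)"
          using pair s by blast
        show ?thesis by (rule dsum_bound[where H=H and s=s and \<Phi>=\<Phi>, OF assms(2,3) n A0 P0 PS pr])
      qed
      also have "\<dots> = ennreal (K * (real n ^ ?d * real n powr (-\<gamma>)))" unfolding K_def by (simp add: algebra_simps)
      finally show ?thesis .
    qed
    have "(SUP s\<in>{0..T}. dsum \<gamma> H n s) \<le> ennreal (K * (real n ^ ?d * real n powr (-\<gamma>)))"
      using db by (simp add: SUP_le_iff)
    then have "ennreal (real n powr \<gamma> / real n ^ (2 * ?d)) * (SUP s\<in>{0..T}. dsum \<gamma> H n s)
        \<le> ennreal (real n powr \<gamma> / real n ^ (2 * ?d)) * ennreal (K * (real n ^ ?d * real n powr (-\<gamma>)))"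
      by (rule mult_left_mono) simp
    also have "\<dots> = ennreal (real n powr \<gamma> / real n ^ (2 * ?d) * (K * (real n ^ ?d * real n powr (-\<gamma>))))"
      by (rule ennreal_mult[symmetric]) (use K0 in simp_all)
    also have eqK: "real n powr \<gamma> / real n ^ (2 * ?d) * (K * (real n ^ ?d * real n powr (-\<gamma>))) = K / real n ^ ?d"
    proof -
      have "real n powr \<gamma> * real n powr (-\<gamma>) = 1" using np by (simp add: powr_add[symmetric])
      moreover have "real n ^ (2 * ?d) = real n ^ ?d * real n ^ ?d" by (simp add: mult_2 power_add)
      ultimately show ?thesis using np by (simp add: field_simps)
    qed
    also have "ennreal (K / real n ^ ?d) \<le> ennreal (C * (real n + real n powr \<gamma>) / real n ^ (?d + 1))"
    proof (rule ennreal_leI)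
      have "K / real n ^ ?d \<le> C / real n ^ ?d" unfolding C_def by (simp add: divide_right_mono)
      also have "\<dots> = C * real n / real n ^ (?d + 1)" using np by simp
      also have "\<dots> \<le> C * (real n + real n powr \<gamma>) / real n ^ (?d + 1)"
        unfolding C_def using K0 by (intro divide_right_mono mult_left_mono) auto
      finally show "K / real n ^ ?d \<le> C * (real n + real n powr \<gamma>) / real n ^ (?d + 1)" .
    qed
    finally show "ennreal (real n powr \<gamma> / real n ^ (2 * ?d)) * (SUP s\<in>{0..T}. dsum \<gamma> H n s)
              \<le> ennreal (C * (real n + real n powr \<gamma>) / real n ^ (?d + 1))" .
  next
    have np: "real n > 0" using n by simp
    have "real n ^ 2 \<le> real n ^ (?d + 1)" using n by (intro power_increasing) auto
    moreover have "0 \<le> C * (real n + real n powr \<gamma>)" unfolding C_def using K0 by simp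
    ultimately show "C * (real n + real n powr \<gamma>) / real n ^ (?d + 1) \<le> C * (real n + real n powr \<gamma>) / real n ^ 2"
      using np by (intro divide_left_mono) auto
  qed
  have "C > 0" unfolding C_def using K0 by simp
  then show ?thesis using part1 part2[OF assms(2,3)] by blast
qed

theorem mainTheorem8:
  fixes T \<gamma> :: real and H :: "real \<Rightarrow> real^'n::finite \<Rightarrow> real"
  assumes "T > 0" and "0 < \<gamma>" and "\<gamma> < 2" and "S_gamma T \<gamma> H"
  shows "(\<exists>C>0. \<forall>n::nat. n \<ge> 1 \<longrightarrow>
            ennreal (real n powr \<gamma> / real n ^ (2 * CARD('n))) * (SUP s\<in>{0..T}. dsum \<gamma> H n s)
              \<le> ennreal (C * (real n + real n powr \<gamma>) / real n ^ (CARD('n) + 1))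
          \<and> C * (real n + real n powr \<gamma>) / real n ^ (CARD('n) + 1)
              \<le> C * (real n + real n powr \<gamma>) / real n ^ 2)
       \<and> (\<exists>C'>0. \<forall>n::nat. n \<ge> 2 \<longrightarrow>
            (real n + real n powr \<gamma>) / real n ^ 2 \<le> C' * r_n \<gamma> n / real n)"
proof -
  have ex: "\<exists>A \<Phi>. 0 \<le> A \<and> (\<forall>u. 0 \<le> \<Phi> u)
    \<and> (\<forall>n::nat. n \<ge> 1 \<longrightarrow> (\<forall>X. finite X \<and> X \<subseteq> lattice \<longrightarrow> (\<Sum>x\<in>X. \<Phi> ((1 / real n) *\<^sub>R x)) \<le> A * real n ^ CARD('n)))
    \<and> (\<forall>s\<in>{0..T}. \<forall>a b. (H s b - H s a)^2 \<le> A * min (norm (b - a)^2) 1 * (\<Phi> a + \<Phi> b))"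
  proof (cases "\<gamma> \<le> 1 \<or> CARD('n) \<ge> 2")
    case True
    then have "C12c T H" using assms(4) unfolding S_gamma_def by simp
    then show ?thesis by (rule compact_case)
  next
    case False
    then have "S12 T H" using assms(4) unfolding S_gamma_def by simp
    moreover have "CARD('n) = 1"
    proof -
      have "CARD('n) > 0" by simp
      then show ?thesis using False by linarith
    qed
    ultimately show ?thesis by (rule S12_case)
  qed
  then show ?thesis
    apply (elim exE conjE)
    apply (rule main_from_ex[OF assms(1-3)])
    apply assumption+
    done
qed

end
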